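(* Let $d\ge2$, $F\in(0,1)$ with $F\ne\frac12$, and let $\rho_0=F|\mathrm{GHZ}_d\rangle\langle\mathrm{GHZ}_d|+(1-F)Z_1|\mathrm{GHZ}_d\rangle\langle\mathrm{GHZ}_d|Z_1$, where $|\mathrm{GHZ}_d\rangle=(|0\cdots0\rangle+|1\cdots1\rangle)/\sqrt2$ and $Z_1$ is $\sigma_z$ on the first qubit. Let $\rho_x=U(x)\rho_0U(x)^\dagger$ with $U(x)=\exp[-\frac i2\sum_{i=1}^d x_i\sigma_z^{(i)}]$, and for $\alpha\in\mathbb{R}$ let $M(\alpha)=O(\alpha)^{\otimes d}$, $O(\alpha)=e^{i\alpha}|1\rangle\langle0|+e^{-i\alpha}|0\rangle\langle1|$. For $\alpha$ with $\sin(d\alpha)\neq0$ the error-propagation variance at $x=0$, $$V(\alpha)=\frac{\langle M(\alpha)^2\rangle-\langle M(\alpha)\rangle^2}{\big|v_1\cdot\nabla_x\langle M(\alpha)\rangle\big|^2}\Bigg|_{x=0},\quad \langle A\rangle=\mathrm{Tr}(\rho_xA),\ v_1=\tfrac{1}{\sqrt d}(1,\dots,1)^T,$$ equals $\frac{1-(2F-1)^2\cos^2(d\alpha)}{d(2F-1)^2\sin^2(d\alpha)}$; it is minimized exactly at $\alpha=\frac{(2l+1)\pi}{2d}$, $l\in\mathbb{Z}$, and the minimum value is $\frac{1}{d(2F-1)^2}$, which equals $1/\big(d(1-C)\big)$ with $C=4F(1-F)$, the inverse of the quantum Fisher information $d(1-C)$ for $\theta_1=v_1^Tx$ of this state.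
   Context: For a GHZ-diagonal $d$-qubit state with eigenvalues $\lambda^\pm_s$ on $|G^\pm_s\rangle=(|s\rangle\pm|\bar s\rangle)/\sqrt2$ (one representative $s$ per complementary pair of bit strings), $C=\sum_s\frac{4\lambda^+_s\lambda^-_s}{\lambda^+_s+\lambda^-_s}$ with terms having $\lambda^+_s+\lambda^-_s=0$ set to $0$; for the state $\rho_0$ above this gives $C=4F(1-F)$. The quantum Fisher information for $\theta_1$ under the encoding $U(x)$ is $d(1-C)$, so the claim says this measurement saturates the quantum Cramér–Rao bound. *)

theory Defs
  imports "HOL-Analysis.Analysis"
begin

text \<open>Operators on d qubits are represented as functions nat => nat => complex on the
  computational basis indices 0 ..< 2^d.  Qubit i (1 <= i <= d) of basis index k is
  the bit (k div 2^(d-i)) mod 2, i.e. qubit 1 is the most significant bit, so the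
  basis state with index k is |b_1 ... b_d>.\<close>

type_synonym cmat = "nat \<Rightarrow> nat \<Rightarrow> complex"
type_synonym cvec = "nat \<Rightarrow> complex"

definition mmul :: "nat \<Rightarrow> cmat \<Rightarrow> cmat \<Rightarrow> cmat" where
  "mmul n A B = (\<lambda>i j. \<Sum>k<n. A i k * B k j)"

definition mtrace :: "nat \<Rightarrow> cmat \<Rightarrow> complex" where
  "mtrace n A = (\<Sum>i<n. A i i)"

definition adj :: "cmat \<Rightarrow> cmat" where
  "adj A = (\<lambda>i j. cnj (A j i))"

definition outer :: "cvec \<Rightarrow> cvec \<Rightarrow> cmat" where
  "outer u v = (\<lambda>i j. u i * cnj (v j))"

definition qbit :: "nat \<Rightarrow> nat \<Rightarrow> nat \<Rightarrow> nat" where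
  "qbit d k i = (k div 2 ^ (d - i)) mod 2"

definition sz :: "nat \<Rightarrow> real" where
  "sz b = (if b = 0 then 1 else -1)"

definition ghz :: "nat \<Rightarrow> cvec" where
  "ghz d = (\<lambda>k. if k = 0 \<or> k = 2 ^ d - 1 then complex_of_real (1 / sqrt 2) else 0)"

definition Z1 :: "nat \<Rightarrow> cmat" where
  "Z1 d = (\<lambda>j k. if j = k then complex_of_real (sz (qbit d k 1)) else 0)"

definition rho0 :: "nat \<Rightarrow> real \<Rightarrow> cmat" where
  "rho0 d F = (\<lambda>i j. complex_of_real F * outer (ghz d) (ghz d) i j
     + complex_of_real (1 - F) * mmul (2^d) (Z1 d) (mmul (2^d) (outer (ghz d) (ghz d)) (Z1 d)) i j)"

text \<open>U(x) = exp(-i/2 sum_i x_i sigma_z^(i)); this operator is diagonal in the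
  computational basis, so its exponential is the diagonal matrix of exponentials.\<close>
definition Uenc :: "nat \<Rightarrow> (nat \<Rightarrow> real) \<Rightarrow> cmat" where
  "Uenc d x = (\<lambda>j k. if j = k then
      exp (- \<i> / 2 * complex_of_real (\<Sum>i\<in>{1..d}. x i * sz (qbit d k i))) else 0)"

definition rhox :: "nat \<Rightarrow> real \<Rightarrow> (nat \<Rightarrow> real) \<Rightarrow> cmat" where
  "rhox d F x = mmul (2^d) (Uenc d x) (mmul (2^d) (rho0 d F) (adj (Uenc d x)))"

text \<open>O(alpha) = e^{i alpha}|1><0| + e^{-i alpha}|0><1|, entries indexed (row, column)\<close>
definition Oop :: "real \<Rightarrow> cmat" where
  "Oop a = (\<lambda>b c. if b = 1 \<and> c = 0 then exp (\<i> * complex_of_real a)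
                 else if b = 0 \<and> c = 1 then exp (- \<i> * complex_of_real a) else 0)"

definition Mop :: "nat \<Rightarrow> real \<Rightarrow> cmat" where
  "Mop d a = (\<lambda>j k. \<Prod>i\<in>{1..d}. Oop a (qbit d j i) (qbit d k i))"

text \<open><A> = Tr(rho_x A) (real for Hermitian A; we take the real part)\<close>
definition expval :: "nat \<Rightarrow> real \<Rightarrow> (nat \<Rightarrow> real) \<Rightarrow> cmat \<Rightarrow> real" where
  "expval d F x A = Re (mtrace (2^d) (mmul (2^d) (rhox d F x) A))"

definition pderiv_at :: "((nat \<Rightarrow> real) \<Rightarrow> real) \<Rightarrow> (nat \<Rightarrow> real) \<Rightarrow> nat \<Rightarrow> real" where
  "pderiv_at f x i = deriv (\<lambda>t. f (x(i := t))) (x i)"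

definition Vvar :: "nat \<Rightarrow> real \<Rightarrow> real \<Rightarrow> real" where
  "Vvar d F a =
    (let f = (\<lambda>x. expval d F x (Mop d a));
         x0 = (\<lambda>_. 0 :: real);
         num = expval d F x0 (mmul (2^d) (Mop d a) (Mop d a)) - (f x0)\<^sup>2;
         dir = (\<Sum>i\<in>{1..d}. (1 / sqrt (real d)) * pderiv_at f x0 i)
     in num / \<bar>dir\<bar>\<^sup>2)"

text \<open>GHZ basis |G^{+-}_s> = (|s> +- |bar s>)/sqrt 2; representatives s < 2^(d-1)
  (first qubit 0), with bar s = 2^d - 1 - s.\<close>
definition ghz_vec :: "nat \<Rightarrow> nat \<Rightarrow> real \<Rightarrow> cvec" where
  "ghz_vec d s sg = (\<lambda>k. if k = s then complex_of_real (1 / sqrt 2)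
       else if k = 2 ^ d - 1 - s then complex_of_real (sg / sqrt 2) else 0)"

definition ghz_eig :: "nat \<Rightarrow> cmat \<Rightarrow> nat \<Rightarrow> real \<Rightarrow> real" where
  "ghz_eig d \<rho> s sg = Re (\<Sum>j<2^d. \<Sum>k<2^d. cnj (ghz_vec d s sg j) * \<rho> j k * ghz_vec d s sg k)"

definition ghz_C :: "nat \<Rightarrow> cmat \<Rightarrow> real" where
  "ghz_C d \<rho> = (\<Sum>s<2^(d-1).
     (let lp = ghz_eig d \<rho> s 1; lm = ghz_eig d \<rho> s (-1)
      in if lp + lm = 0 then 0 else 4 * lp * lm / (lp + lm)))"

definition qfi_theta1 :: "nat \<Rightarrow> cmat \<Rightarrow> real" where
  "qfi_theta1 d \<rho> = real d * (1 - ghz_C d \<rho>)"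

end

theory Submission imports Defs begin

lemma bits_one_aux: "m < 2^d \<Longrightarrow> (\<forall>j<d. (m::nat) div 2^j mod 2 = 1) \<Longrightarrow> m = 2^d - 1"
proof (induction d arbitrary: m)
  case 0 then show ?case by simp
next
  case (Suc d)
  have "m div 2 < 2^d" using Suc.prems(1) by auto
  moreover have "\<forall>j<d. m div 2 div 2^j mod 2 = 1"
    using Suc.prems(2) by (auto simp: div_mult2_eq[symmetric] mult.commute)
  ultimately have "m div 2 = 2^d - 1" using Suc.IH by blast
  moreover have "m mod 2 = 1" using Suc.prems(2)[rule_format, of 0] by simp
  moreover have "m = 2 * (m div 2) + m mod 2" by simp
  ultimately have "m = 2 * (2^d - 1) + 1" by simp
  moreover have "(2::nat)^d \<ge> 1" by simp
  ultimately have "m = 2 * 2^d - 1" by arith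
  then show ?case by simp
qed

lemma bits_zero_aux: "m < 2^d \<Longrightarrow> (\<forall>j<d. (m::nat) div 2^j mod 2 = 0) \<Longrightarrow> m = 0"
proof (induction d arbitrary: m)
  case 0 then show ?case by simp
next
  case (Suc d)
  have "m div 2 < 2^d" using Suc.prems(1) by auto
  moreover have "\<forall>j<d. m div 2 div 2^j mod 2 = 0"
    using Suc.prems(2) by (auto simp: div_mult2_eq[symmetric] mult.commute)
  ultimately have "m div 2 = 0" using Suc.IH by blast
  moreover have "m mod 2 = 0" using Suc.prems(2)[rule_format, of 0] by simp
  moreover have "m = 2 * (m div 2) + m mod 2" by simp
  ultimately show ?case by simp
qed

lemma qbit_all_one: "m < 2^d \<Longrightarrow> (\<forall>i\<in>{1..d}. qbit d m i = 1) \<Longrightarrow> m = 2^d - 1"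
  apply (rule bits_one_aux, assumption)
  apply (auto simp: qbit_def)
  subgoal for j by (drule bspec[of _ _ "d - j"]) auto
  done

lemma qbit_all_zero: "m < 2^d \<Longrightarrow> (\<forall>i\<in>{1..d}. qbit d m i = 0) \<Longrightarrow> m = 0"
  apply (rule bits_zero_aux, assumption)
  apply (auto simp: qbit_def)
  subgoal for j by (drule bspec[of _ _ "d - j"]) auto
  done

lemma qbit_0[simp]: "qbit d 0 i = 0" by (simp add: qbit_def)

lemma top_div: "m \<le> d \<Longrightarrow> (2^d - 1::nat) div 2^m = 2^(d-m) - 1"
proof -
  assume "m \<le> d"
  then have "(2::nat)^d = 2^m * 2^(d-m)" by (simp add: power_add[symmetric])
  then have "(2^d - 1::nat) = 2^m * (2^(d-m) - 1) + (2^m - 1)"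
    by (simp add: algebra_simps diff_mult_distrib2)
  moreover have "\<And>q r. r < 2^m \<Longrightarrow> ((2::nat)^m * q + r) div 2^m = q" by simp
  moreover have "(2::nat)^m - 1 < 2^m" by simp
  ultimately show ?thesis by metis
qed

lemma qbit_top: "i \<in> {1..d} \<Longrightarrow> qbit d (2^d - 1) i = 1"
proof -
  assume i: "i \<in> {1..d}"
  then have "(2^d - 1::nat) div 2^(d-i) = 2^i - 1" using top_div[of "d-i" d] by auto
  moreover have "odd ((2::nat)^i - 1)" using i by simp
  then have "((2::nat)^i - 1) mod 2 = 1" using odd_iff_mod_2_eq_one by blast
  ultimately show ?thesis by (simp add: qbit_def odd_iff_mod_2_eq_one)
qed

definition gg :: "nat \<Rightarrow> nat \<Rightarrow> real" where
  "gg d k = (if k = 0 \<or> k = 2^d - 1 then 1 / sqrt 2 else 0)"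
definition zz :: "nat \<Rightarrow> nat \<Rightarrow> real" where
  "zz d k = sz (qbit d k 1)"
definition Sx :: "nat \<Rightarrow> (nat \<Rightarrow> real) \<Rightarrow> nat \<Rightarrow> real" where
  "Sx d x k = (\<Sum>i\<in>{1..d}. x i * sz (qbit d k i))"

lemma mmul_diag_l: "mmul n (\<lambda>i j. if i = j then a j else 0) B i j = (if i < n then a i * B i j else 0)"
proof -
  have "(\<Sum>k<n. (if i = k then a k else 0) * B k j) = (\<Sum>k<n. if i = k then a i * B i j else 0)"
    by (rule sum.cong) auto
  then show ?thesis by (simp add: mmul_def)
qed

lemma mmul_diag_r: "mmul n A (\<lambda>i j. if i = j then b j else 0) i j = (if j < n then A i j * b j else 0)"
proof -
  have "(\<Sum>k<n. A i k * (if k = j then b j else 0)) = (\<Sum>k<n. if j = k then A i j * b j else 0)"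
    by (rule sum.cong) auto
  then show ?thesis by (simp add: mmul_def)
qed

lemma ghz_eq: "ghz d = (\<lambda>k. complex_of_real (gg d k))"
  by (auto simp: ghz_def gg_def)

lemma Z1_eq: "Z1 d = (\<lambda>j k. if j = k then complex_of_real (zz d k) else 0)"
  unfolding Z1_def zz_def by simp

lemma Uenc_eq: "Uenc d x = (\<lambda>j k. if j = k then cis (- Sx d x k / 2) else 0)"
  unfolding Uenc_def Sx_def cis_conv_exp by (intro ext) (simp add: algebra_simps)

lemma adjU_eq: "adj (Uenc d x) = (\<lambda>j k. if j = k then cis (Sx d x k / 2) else 0)"
  unfolding adj_def Uenc_eq by (intro ext) (auto simp: cis_cnj)

lemma rho0_entry: "j < 2^d \<Longrightarrow> k < 2^d \<Longrightarrow>
  rho0 d F j k = complex_of_real (gg d j * gg d k * (F + (1-F) * zz d j * zz d k))"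
  unfolding rho0_def Z1_eq ghz_eq
  by (simp add: mmul_diag_l mmul_diag_r outer_def algebra_simps)

lemma rhox_entry: "j < 2^d \<Longrightarrow> k < 2^d \<Longrightarrow>
  rhox d F x j k = cis (- Sx d x j / 2) * rho0 d F j k * cis (Sx d x k / 2)"
  unfolding rhox_def adjU_eq unfolding Uenc_eq
  by (simp add: mmul_diag_l mmul_diag_r)

lemma sum2: assumes "2 \<le> (N::nat)" "\<And>i. i < N \<Longrightarrow> i \<noteq> 0 \<Longrightarrow> i \<noteq> N - 1 \<Longrightarrow> h i = 0"
  shows "(\<Sum>i<N. h i) = h 0 + h (N - 1)"
proof -
  have "(\<Sum>i<N. h i) = (\<Sum>i\<in>{0, N-1}. h i)"
    by (rule sum.mono_neutral_right) (use assms in auto)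
  then show ?thesis using assms(1) by simp
qed

lemma sum2N: assumes "2 \<le> (M::nat)" "N = M - 1" "\<And>i. i < M \<Longrightarrow> i \<noteq> 0 \<Longrightarrow> i \<noteq> N \<Longrightarrow> h i = 0"
  shows "(\<Sum>i<M. h i) = h 0 + h N"
  using sum2[of M h] assms by simp

lemma expval_reduce:
  assumes d: "d \<ge> 2"
  shows "expval d F x A = Re (rhox d F x 0 0 * A 0 0 + rhox d F x 0 (2^d-1) * A (2^d-1) 0
     + rhox d F x (2^d-1) 0 * A 0 (2^d-1) + rhox d F x (2^d-1) (2^d-1) * A (2^d-1) (2^d-1))"
proof -
  have N: "(2::nat) \<le> 2^d" using d power_increasing[of 1 d "2::nat"] by simp
  have z: "rhox d F x j k = 0" if "j < 2^d" "k < 2^d" "j \<notin> {0, 2^d-1} \<or> k \<notin> {0, 2^d-1}" for j k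
    using that by (auto simp: rhox_entry rho0_entry gg_def)
  have "mtrace (2^d) (mmul (2^d) (rhox d F x) A) = (\<Sum>j<2^d. \<Sum>k<2^d. rhox d F x j k * A k j)"
    by (simp add: mtrace_def mmul_def)
  also have "\<dots> = (\<Sum>j<2^d. rhox d F x j 0 * A 0 j + rhox d F x j (2^d-1) * A (2^d-1) j)"
    by (rule sum.cong[OF refl], rule sum2[OF N]) (use z in auto)
  also have "\<dots> = rhox d F x 0 0 * A 0 0 + rhox d F x 0 (2^d-1) * A (2^d-1) 0
     + (rhox d F x (2^d-1) 0 * A 0 (2^d-1) + rhox d F x (2^d-1) (2^d-1) * A (2^d-1) (2^d-1))"
    by (rule sum2[OF N]) (use z N in auto)
  finally show ?thesis by (simp add: expval_def add.assoc)
qed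

lemma sz_simps[simp]: "sz 0 = 1" "sz 1 = -1" "sz (Suc 0) = -1" by (auto simp: sz_def)

lemma qbit_lt2: "qbit d m i < 2" by (simp add: qbit_def)

lemma zz_0[simp]: "zz d 0 = 1" by (simp add: zz_def)
lemma zz_top: "d \<ge> 1 \<Longrightarrow> zz d (2^d - 1) = -1" unfolding zz_def using qbit_top[of 1 d] by simp
lemma gg_0[simp]: "gg d 0 = 1 / sqrt 2" by (simp add: gg_def)
lemma gg_top: "gg d (2^d - 1) = 1 / sqrt 2" by (simp add: gg_def)
lemma Sx_0: "Sx d x 0 = (\<Sum>i\<in>{1..d}. x i)" by (simp add: Sx_def)
lemma Sx_top: "Sx d x (2^d - 1) = - (\<Sum>i\<in>{1..d}. x i)"
proof -
  have "Sx d x (2^d - 1) = (\<Sum>i\<in>{1..d}. - x i)"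
    unfolding Sx_def by (rule sum.cong[OF refl]) (use qbit_top[of _ d] in auto)
  then show ?thesis by (simp add: sum_negf)
qed

lemma half_sq: "1 / sqrt 2 * (1 / sqrt 2) = (1/2::real)"
  by (simp flip: real_sqrt_mult)

lemma twod: "d \<ge> 2 \<Longrightarrow> (2::nat) \<le> 2^d"
  using power_increasing[of 1 d "2::nat"] by simp

lemma rx_vals:
  assumes d: "d \<ge> 2" and N: "N = 2^d - 1"
  shows "rhox d F x 0 0 = 1/2" "rhox d F x N N = 1/2"
    "rhox d F x 0 N = complex_of_real ((2*F-1)/2) * cis (- (\<Sum>i\<in>{1..d}. x i))"
    "rhox d F x N 0 = complex_of_real ((2*F-1)/2) * cis (\<Sum>i\<in>{1..d}. x i)"
proof -
  have N2: "N < 2^d" "0 < (2::nat)^d" using N by auto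
  have zN: "zz d N = -1" using zz_top[of d] d N by simp
  have gN: "gg d N = 1 / sqrt 2" using gg_top N by simp
  have SN: "Sx d x N = - (\<Sum>i\<in>{1..d}. x i)" using Sx_top N by simp
  have r: "rho0 d F 0 0 = 1/2" "rho0 d F N N = 1/2" "rho0 d F 0 N = complex_of_real ((2*F-1)/2)"
     "rho0 d F N 0 = complex_of_real ((2*F-1)/2)"
    using N2 by (simp_all add: rho0_entry zN gN half_sq algebra_simps mult.assoc[symmetric])
  show "rhox d F x 0 0 = 1/2" "rhox d F x N N = 1/2"
    "rhox d F x 0 N = complex_of_real ((2*F-1)/2) * cis (- (\<Sum>i\<in>{1..d}. x i))"
    "rhox d F x N 0 = complex_of_real ((2*F-1)/2) * cis (\<Sum>i\<in>{1..d}. x i)"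
    using N2 by (simp_all add: rhox_entry r SN Sx_0 cis_mult algebra_simps)
qed

lemma Oop_simps: "Oop a 0 0 = 0" "Oop a 1 1 = 0" "Oop a 1 0 = cis a" "Oop a 0 1 = cis (-a)"
  "Oop a (Suc 0) (Suc 0) = 0" "Oop a (Suc 0) 0 = cis a" "Oop a 0 (Suc 0) = cis (-a)"
  by (auto simp: Oop_def cis_conv_exp)

lemma sum_single: "finite A \<Longrightarrow> c \<in> A \<Longrightarrow> (\<And>m. m \<in> A \<Longrightarrow> m \<noteq> c \<Longrightarrow> h m = 0) \<Longrightarrow> sum h A = h c"
proof -
  assume a: "finite A" "c \<in> A" "\<And>m. m \<in> A \<Longrightarrow> m \<noteq> c \<Longrightarrow> h m = 0"
  have "sum h A = sum h {c}" by (rule sum.mono_neutral_right) (use a in auto)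
  then show ?thesis by simp
qed

lemma Mop_zero: "i \<in> {1..d} \<Longrightarrow> Oop a (qbit d j i) (qbit d k i) = 0 \<Longrightarrow> Mop d a j k = 0"
  unfolding Mop_def by (rule prod_zero) auto

lemma qbit_cases: "qbit d m i = 0 \<or> qbit d m i = 1"
  using qbit_lt2[of d m i] by linarith

lemma M_vals:
  assumes d: "d \<ge> 1" and N: "N = 2^d - 1"
  shows "Mop d a 0 0 = 0" "Mop d a N N = 0" "Mop d a N 0 = cis (real d * a)"
    "Mop d a 0 N = cis (- (real d * a))"
proof -
  have q: "i \<in> {1..d} \<Longrightarrow> qbit d N i = 1" for i using qbit_top[of i d] N by simp
  have i1: "(1::nat) \<in> {1..d}" using d by simp
  show "Mop d a 0 0 = 0" by (rule Mop_zero[OF i1]) (simp add: Oop_simps)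
  have q1: "qbit d N 1 = 1" by (rule q[OF i1])
  show "Mop d a N N = 0" by (rule Mop_zero[OF i1]) (simp only: q1 Oop_simps(2))
  have "Mop d a N 0 = (\<Prod>i\<in>{1..d}. cis a)"
    unfolding Mop_def by (rule prod.cong[OF refl]) (simp add: q Oop_simps)
  also have "\<dots> = cis a ^ d" by simp
  also have "\<dots> = cis (real d * a)" by (rule Complex.DeMoivre)
  finally show "Mop d a N 0 = cis (real d * a)" .
  have "Mop d a 0 N = (\<Prod>i\<in>{1..d}. cis (-a))"
    unfolding Mop_def by (rule prod.cong[OF refl]) (simp add: q Oop_simps)
  then have "Mop d a 0 N = cis (-a) ^ d" by simp
  also have "\<dots> = cis (real d * (-a))" by (rule Complex.DeMoivre)
  finally show "Mop d a 0 N = cis (- (real d * a))" by simp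
qed

lemma MM_vals:
  assumes d: "d \<ge> 1" and N: "N = 2^d - 1"
  shows "mmul (2^d) (Mop d a) (Mop d a) 0 0 = 1" "mmul (2^d) (Mop d a) (Mop d a) N N = 1"
    "mmul (2^d) (Mop d a) (Mop d a) 0 N = 0" "mmul (2^d) (Mop d a) (Mop d a) N 0 = 0"
proof -
  note MV = M_vals[OF d N]
  have q: "i \<in> {1..d} \<Longrightarrow> qbit d N i = 1" for i using qbit_top[of i d] N by simp
  have i1: "(1::nat) \<in> {1..d}" using d by simp
  have Nl: "N < 2^d" "0 < (2::nat)^d" using N by auto
  have "(\<Sum>m<2^d. Mop d a 0 m * Mop d a m 0) = Mop d a 0 N * Mop d a N 0"
  proof (rule sum_single)
    fix m :: nat assume m: "m \<in> {..<2^d}" "m \<noteq> N"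
    have "m < 2^d" using m by simp
    then obtain i where i: "i \<in> {1..d}" "qbit d m i \<noteq> 1" using qbit_all_one[of m d] N m(2) by blast
    then have "qbit d m i = 0" using qbit_cases[of d m i] i(2) by simp
    then have "Mop d a 0 m = 0" by (intro Mop_zero[OF i(1)]) (simp add: Oop_simps)
    then show "Mop d a 0 m * Mop d a m 0 = 0" by simp
  qed (use Nl in auto)
  then show "mmul (2^d) (Mop d a) (Mop d a) 0 0 = 1" by (simp add: mmul_def MV cis_mult)
  have "(\<Sum>m<2^d. Mop d a N m * Mop d a m N) = Mop d a N 0 * Mop d a 0 N"
  proof (rule sum_single)
    fix m :: nat assume m: "m \<in> {..<2^d}" "m \<noteq> 0"
    have "m < 2^d" using m by simp
    then obtain i where i: "i \<in> {1..d}" "qbit d m i \<noteq> 0" using qbit_all_zero[of m d] m(2) by blast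
    then have "qbit d m i = 1" using qbit_cases[of d m i] i(2) by simp
    then have "Mop d a N m = 0" using q[OF i(1)] by (intro Mop_zero[OF i(1)]) (metis Oop_simps(2))
    then show "Mop d a N m * Mop d a m N = 0" by simp
  qed (use Nl in auto)
  then show "mmul (2^d) (Mop d a) (Mop d a) N N = 1" by (simp add: mmul_def MV cis_mult)
  have "(\<Sum>m<2^d. Mop d a 0 m * Mop d a m N) = 0"
  proof (rule sum.neutral, rule ballI)
    fix m :: nat assume m: "m \<in> {..<2^d}"
    show "Mop d a 0 m * Mop d a m N = 0"
    proof (cases "\<forall>i\<in>{1..d}. qbit d m i = 1")
      case True
      then have "Mop d a m N = 0" using q[OF i1] True i1 by (intro Mop_zero[OF i1]) (metis Oop_simps(2))
      then show ?thesis by simp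
    next
      case False
      then obtain i where i: "i \<in> {1..d}" "qbit d m i \<noteq> 1" by auto
      then have "qbit d m i = 0" using qbit_cases[of d m i] i(2) by simp
      then have "Mop d a 0 m = 0" by (intro Mop_zero[OF i(1)]) (simp add: Oop_simps)
      then show ?thesis by simp
    qed
  qed
  then show "mmul (2^d) (Mop d a) (Mop d a) 0 N = 0" by (simp add: mmul_def)
  have "(\<Sum>m<2^d. Mop d a N m * Mop d a m 0) = 0"
  proof (rule sum.neutral, rule ballI)
    fix m :: nat assume m: "m \<in> {..<2^d}"
    show "Mop d a N m * Mop d a m 0 = 0"
    proof (cases "\<forall>i\<in>{1..d}. qbit d m i = 0")
      case True
      then have "Mop d a m 0 = 0" using True i1 by (intro Mop_zero[OF i1]) (metis Oop_simps(1) qbit_0)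
      then show ?thesis by simp
    next
      case False
      then obtain i where i: "i \<in> {1..d}" "qbit d m i \<noteq> 0" by auto
      then have "qbit d m i = 1" using qbit_cases[of d m i] i(2) by simp
      then have "Mop d a N m = 0" using q[OF i(1)] by (intro Mop_zero[OF i(1)]) (metis Oop_simps(2))
      then show ?thesis by simp
    qed
  qed
  then show "mmul (2^d) (Mop d a) (Mop d a) N 0 = 0" by (simp add: mmul_def)
qed

lemma cos_swap: "cos (u - v) = cos (v - u)"
  by (metis cos_minus minus_diff_eq)

lemma expval_M:
  assumes d: "d \<ge> 2"
  shows "expval d F x (Mop d a) = (2*F-1) * cos (real d * a - (\<Sum>i\<in>{1..d}. x i))"
proof -
  define N where "N = (2::nat)^d - 1"
  have d1: "d \<ge> 1" using d by simp
  note R = rx_vals[OF d N_def] and MV = M_vals[OF d1 N_def]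
  define S where "S = (\<Sum>i\<in>{1..d}. x i)"
  define c where "c = (2*F-1)/2"
  have "expval d F x (Mop d a) = Re (rhox d F x 0 0 * Mop d a 0 0 + rhox d F x 0 N * Mop d a N 0
     + rhox d F x N 0 * Mop d a 0 N + rhox d F x N N * Mop d a N N)"
    using expval_reduce[OF d, of F x "Mop d a", folded N_def] .
  also have "\<dots> = Re (complex_of_real c * (cis (- S) * cis (real d * a)) + complex_of_real c * (cis S * cis (- (real d * a))))"
    unfolding R MV S_def[symmetric] c_def[symmetric] by (simp add: mult.assoc)
  also have "\<dots> = Re (complex_of_real c * cis (real d * a - S) + complex_of_real c * cis (- (real d * a - S)))"
    unfolding cis_mult by (simp add: algebra_simps)
  also have "\<dots> = 2 * c * cos (real d * a - S)"
    using cos_swap[of S "real d * a"] by simp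
  also have "\<dots> = (2*F-1) * cos (real d * a - S)" by (simp add: c_def)
  finally show ?thesis by (simp add: S_def)
qed

lemma expval_MM:
  assumes d: "d \<ge> 2"
  shows "expval d F x (mmul (2^d) (Mop d a) (Mop d a)) = 1"
proof -
  define N where "N = (2::nat)^d - 1"
  have d1: "d \<ge> 1" using d by simp
  note R = rx_vals[OF d N_def] and MV = MM_vals[OF d1 N_def]
  have "expval d F x (mmul (2^d) (Mop d a) (Mop d a)) = Re (rhox d F x 0 0 * mmul (2^d) (Mop d a) (Mop d a) 0 0 + rhox d F x 0 N * mmul (2^d) (Mop d a) (Mop d a) N 0
     + rhox d F x N 0 * mmul (2^d) (Mop d a) (Mop d a) 0 N + rhox d F x N N * mmul (2^d) (Mop d a) (Mop d a) N N)"
    using expval_reduce[OF d, of F x "mmul (2^d) (Mop d a) (Mop d a)", folded N_def] .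
  also have "\<dots> = 1"
    by (simp add: R MV)
  finally show ?thesis .
qed

lemma Vvar_formula:
  assumes d: "d \<ge> 2"
  shows "Vvar d F a = (1 - (2*F - 1)\<^sup>2 * (cos (real d * a))\<^sup>2)
                         / (real d * (2*F - 1)\<^sup>2 * (sin (real d * a))\<^sup>2)"
proof -
  define c where "c = 2*F - 1"
  define f where "f = (\<lambda>x. expval d F x (Mop d a))"
  define x0 where "x0 = (\<lambda>_::nat. 0::real)"
  have f: "f x = c * cos (real d * a - (\<Sum>i\<in>{1..d}. x i))" for x
    unfolding f_def c_def using expval_M[OF d] by simp
  have num: "expval d F x0 (mmul (2^d) (Mop d a) (Mop d a)) - (f x0)\<^sup>2 = 1 - c\<^sup>2 * (cos (real d * a))\<^sup>2"
    using expval_MM[OF d] f by (simp add: x0_def power_mult_distrib)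
  have pd: "pderiv_at f x0 i = c * sin (real d * a)" if i: "i \<in> {1..d}" for i
  proof -
    have "f (x0(i := t)) = c * cos (real d * a - t)" for t
    proof -
      have "(\<Sum>j\<in>{1..d}. (x0(i := t)) j) = (\<Sum>j\<in>{1..d}. if j = i then t else 0)"
        by (rule sum.cong) (auto simp: x0_def)
      also have "\<dots> = t" using i by (simp add: sum.delta')
      finally show ?thesis using f by simp
    qed
    then have e: "(\<lambda>t. f (x0(i := t))) = (\<lambda>t. c * cos (real d * a - t))" by (rule ext)
    have "((\<lambda>t. c * cos (real d * a - t)) has_real_derivative c * sin (real d * a - 0)) (at 0)"
      by (auto intro!: derivative_eq_intros)
    then have "deriv (\<lambda>t. c * cos (real d * a - t)) 0 = c * sin (real d * a)"
      using DERIV_imp_deriv by fastforce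
    then show ?thesis unfolding pderiv_at_def e by (simp add: x0_def)
  qed
  have dir: "(\<Sum>i\<in>{1..d}. (1 / sqrt (real d)) * pderiv_at f x0 i) = real d * (1 / sqrt (real d)) * (c * sin (real d * a))"
    using pd by simp
  have dpos: "real d > 0" using d by simp
  have sq: "\<bar>real d * (1 / sqrt (real d)) * (c * sin (real d * a))\<bar>\<^sup>2 = real d * c\<^sup>2 * (sin (real d * a))\<^sup>2"
    using dpos by (simp add: power_mult_distrib power2_abs real_sqrt_pow2 power_divide) (simp add: power2_eq_square)
  have "Vvar d F a = (expval d F x0 (mmul (2^d) (Mop d a) (Mop d a)) - (f x0)\<^sup>2)
      / \<bar>\<Sum>i\<in>{1..d}. (1 / sqrt (real d)) * pderiv_at f x0 i\<bar>\<^sup>2"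
    unfolding Vvar_def Let_def f_def x0_def by (rule refl)
  also have "\<dots> = (1 - c\<^sup>2 * (cos (real d * a))\<^sup>2) / (real d * c\<^sup>2 * (sin (real d * a))\<^sup>2)"
    unfolding num dir sq ..
  finally show ?thesis unfolding c_def .
qed

lemma r0_vals:
  assumes d: "d \<ge> 2" and N: "N = 2^d - 1"
  shows "rho0 d F 0 0 = complex_of_real (1/2)" "rho0 d F N N = complex_of_real (1/2)" "rho0 d F 0 N = complex_of_real ((2*F-1)/2)"
     "rho0 d F N 0 = complex_of_real ((2*F-1)/2)"
proof -
  have N2: "N < 2^d" "0 < (2::nat)^d" using N by auto
  have zN: "zz d N = -1" using zz_top[of d] d N by simp
  have gN: "gg d N = 1 / sqrt 2" using gg_top N by simp
  show "rho0 d F 0 0 = complex_of_real (1/2)" "rho0 d F N N = complex_of_real (1/2)" "rho0 d F 0 N = complex_of_real ((2*F-1)/2)"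
     "rho0 d F N 0 = complex_of_real ((2*F-1)/2)"
    using N2 by (simp_all add: rho0_entry zN gN half_sq algebra_simps mult.assoc[symmetric])
qed

lemma eig0:
  assumes d: "d \<ge> 2" and sg: "sg = 1 \<or> sg = -1"
  shows "ghz_eig d (rho0 d F) 0 sg = (1 + sg * (2*F - 1)) / 2"
proof -
  define N where "N = (2::nat)^d - 1"
  have N2: "2 \<le> (2::nat)^d" "N \<noteq> 0" using twod[OF d] N_def by auto
  define v where "v = ghz_vec d 0 sg"
  define r where "r = 1 / sqrt 2"
  define c where "c = (2*F-1)/2"
  have v: "v 0 = complex_of_real r" "v N = complex_of_real (sg * r)"
     "\<And>k. k \<noteq> 0 \<Longrightarrow> k \<noteq> N \<Longrightarrow> v k = 0"
    using N2 by (auto simp: v_def ghz_vec_def N_def r_def)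
  note R = r0_vals[OF d N_def]
  have "(\<Sum>j<2^d. \<Sum>k<2^d. cnj (v j) * rho0 d F j k * v k)
     = (\<Sum>j<2^d. cnj (v j) * rho0 d F j 0 * v 0 + cnj (v j) * rho0 d F j N * v N)"
    by (rule sum.cong[OF refl], rule sum2N[OF N2(1) N_def]) (use v N_def in auto)
  also have "\<dots> = (cnj (v 0) * rho0 d F 0 0 * v 0 + cnj (v 0) * rho0 d F 0 N * v N)
      + (cnj (v N) * rho0 d F N 0 * v 0 + cnj (v N) * rho0 d F N N * v N)"
    by (rule sum2N[OF N2(1) N_def]) (use v N_def in auto)
  also have "\<dots> = complex_of_real (r * (1/2) * r + r * c * (sg*r) + (sg*r) * c * r + (sg*r) * (1/2) * (sg*r))"
    unfolding v R c_def[symmetric] by (simp only: complex_cnj_complex_of_real of_real_mult[symmetric] of_real_add[symmetric] add.assoc)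
  also have "r * (1/2) * r + r * c * (sg*r) + (sg*r) * c * r + (sg*r) * (1/2) * (sg*r)
      = (r*r) * (1/2 + 2* sg*c + (sg* sg)/2)" by (simp add: algebra_simps)
  also have "\<dots> = (1 + sg * (2*F - 1)) / 2"
    using sg half_sq unfolding r_def c_def by auto
  finally have X: "(\<Sum>j<2^d. \<Sum>k<2^d. cnj (v j) * rho0 d F j k * v k) = complex_of_real ((1 + sg * (2*F - 1)) / 2)" .
  show ?thesis unfolding ghz_eig_def v_def[symmetric] X by (simp only: Re_complex_of_real)
qed

lemma eig_other:
  assumes d: "d \<ge> 2" and s: "s < 2^(d-1)" "s \<noteq> 0"
  shows "ghz_eig d (rho0 d F) s sg = 0"
proof -
  have dd: "(2::nat)^d = 2 * 2^(d-1)" using d by (cases d) auto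
  have sN: "s < 2^d - 1" using s dd by linarith
  have "cnj (ghz_vec d s sg j) * rho0 d F j k * ghz_vec d s sg k = 0" if jk: "j < 2^d" "k < 2^d" for j k
  proof (cases "j = 0 \<or> j = 2^d - 1")
    case True
    then have "ghz_vec d s sg j = 0" using sN s(2) by (auto simp: ghz_vec_def)
    then show ?thesis by simp
  next
    case False
    then have "rho0 d F j k = 0" using jk by (simp add: rho0_entry gg_def)
    then show ?thesis by simp
  qed
  then have "(\<Sum>j<2^d. \<Sum>k<2^d. cnj (ghz_vec d s sg j) * rho0 d F j k * ghz_vec d s sg k) = 0"
    by (intro sum.neutral ballI) simp
  then show ?thesis unfolding ghz_eig_def by simp
qed

lemma ghzC_val:
  assumes d: "d \<ge> 2"
  shows "ghz_C d (rho0 d F) = 4 * F * (1 - F)"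
proof -
  define T where "T = (\<lambda>s. let lp = ghz_eig d (rho0 d F) s 1; lm = ghz_eig d (rho0 d F) s (-1)
      in if lp + lm = 0 then 0 else 4 * lp * lm / (lp + lm))"
  have "ghz_C d (rho0 d F) = (\<Sum>s<2^(d-1). T s)" unfolding ghz_C_def T_def by simp
  also have "\<dots> = T 0"
    by (rule sum_single) (auto simp: T_def eig_other[OF d])
  also have "\<dots> = 4 * F * (1 - F)"
  proof -
    have e1: "ghz_eig d (rho0 d F) 0 1 = F" using eig0[OF d, of 1 F] by simp
    have e2: "ghz_eig d (rho0 d F) 0 (-1) = 1 - F" using eig0[OF d, of "-1" F] by simp
    show ?thesis unfolding T_def Let_def e1 e2 by simp
  qed
  finally show ?thesis .
qed

lemma aopt: assumes "real d > 0"
  shows "cos (real d * a) = 0 \<longleftrightarrow> (\<exists>l::int. a = (2 * real_of_int l + 1) * pi / (2 * real d))"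
proof -
  have "real d * a = real_of_int l * pi + pi/2 \<longleftrightarrow> a = (2 * real_of_int l + 1) * pi / (2 * real d)" for l
    using assms by (auto simp: field_simps)
  then show ?thesis by (simp add: cos_zero_iff_int2)
qed

lemma gmono:
  fixes c2 s1 s2 D :: real
  assumes "0 < c2" "c2 < 1" "D > 0" "s1 > 0" "s2 > 0"
  shows "(1 - c2 * (1 - s1)) / (D * c2 * s1) \<le> (1 - c2 * (1 - s2)) / (D * c2 * s2) \<longleftrightarrow> s2 \<le> s1"
proof -
  define K where "K = (1 - c2) / (D * c2)"
  have K: "K > 0" using assms by (simp add: K_def)
  have e: "(1 - c2 * (1 - s)) / (D * c2 * s) = K / s + 1 / D" if "s > 0" for s
    using that assms by (simp add: K_def field_simps)
  have "K / s1 \<le> K / s2 \<longleftrightarrow> s2 \<le> s1" using K assms(4,5) by (simp add: divide_le_cancel frac_le_eq field_simps) 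
  then show ?thesis using e assms(4,5) by simp
qed

theorem mainTheorem8:
  fixes d :: nat and F :: real
  assumes "d \<ge> 2" and "0 < F" and "F < 1" and "F \<noteq> 1/2"
  shows "(\<forall>a::real. sin (real d * a) \<noteq> 0 \<longrightarrow>
            Vvar d F a = (1 - (2*F - 1)\<^sup>2 * (cos (real d * a))\<^sup>2)
                         / (real d * (2*F - 1)\<^sup>2 * (sin (real d * a))\<^sup>2))
       \<and> (\<forall>a::real. sin (real d * a) \<noteq> 0 \<longrightarrow>
            ((\<forall>b::real. sin (real d * b) \<noteq> 0 \<longrightarrow> Vvar d F a \<le> Vvar d F b)
             \<longleftrightarrow> (\<exists>l::int. a = (2 * real_of_int l + 1) * pi / (2 * real d))))
       \<and> (\<forall>l::int. let a = (2 * real_of_int l + 1) * pi / (2 * real d) in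
            sin (real d * a) \<noteq> 0 \<and> Vvar d F a = 1 / (real d * (2*F - 1)\<^sup>2))
       \<and> ghz_C d (rho0 d F) = 4 * F * (1 - F)
       \<and> 1 / (real d * (2*F - 1)\<^sup>2) = 1 / qfi_theta1 d (rho0 d F)"
proof -
  have d: "d \<ge> 2" by fact
  have dpos: "real d > 0" using d by simp
  define c2 where "c2 = (2*F - 1)\<^sup>2"
  have c2pos: "0 < c2" using assms(4) by (simp add: c2_def)
  have c2lt: "c2 < 1" using assms(2,3) unfolding c2_def by (simp add: abs_square_less_1)
  have V: "Vvar d F a = (1 - c2 * (1 - (sin (real d * a))\<^sup>2)) / (real d * c2 * (sin (real d * a))\<^sup>2)" for a
    unfolding Vvar_formula[OF d] c2_def by (simp add: cos_squared_eq)
  have cmp: "sin (real d * a) \<noteq> 0 \<Longrightarrow> sin (real d * b) \<noteq> 0 \<Longrightarrow>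
     Vvar d F a \<le> Vvar d F b \<longleftrightarrow> (sin (real d * b))\<^sup>2 \<le> (sin (real d * a))\<^sup>2" for a b
    unfolding V by (rule gmono[OF c2pos c2lt dpos]) auto
  have opt_sin: "(\<exists>l::int. a = (2 * real_of_int l + 1) * pi / (2 * real d)) \<longleftrightarrow> (sin (real d * a))\<^sup>2 = 1" for a
    using aopt[OF dpos, of a] sin_squared_eq[of "real d * a"] by auto
  have P1: "\<forall>a::real. sin (real d * a) \<noteq> 0 \<longrightarrow>
            Vvar d F a = (1 - (2*F - 1)\<^sup>2 * (cos (real d * a))\<^sup>2)
                         / (real d * (2*F - 1)\<^sup>2 * (sin (real d * a))\<^sup>2)"
    using Vvar_formula[OF d] by blast
  have P2: "\<forall>a::real. sin (real d * a) \<noteq> 0 \<longrightarrow>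
            ((\<forall>b::real. sin (real d * b) \<noteq> 0 \<longrightarrow> Vvar d F a \<le> Vvar d F b)
             \<longleftrightarrow> (\<exists>l::int. a = (2 * real_of_int l + 1) * pi / (2 * real d)))"
  proof (intro allI impI)
    fix a assume sa: "sin (real d * a) \<noteq> 0"
    have le1: "(sin (real d * b))\<^sup>2 \<le> 1" for b by (simp add: abs_square_le_1)
    define b0 where "b0 = pi / (2 * real d)"
    have sb0: "sin (real d * b0) = 1" using dpos by (simp add: b0_def)
    show "(\<forall>b::real. sin (real d * b) \<noteq> 0 \<longrightarrow> Vvar d F a \<le> Vvar d F b)
             \<longleftrightarrow> (\<exists>l::int. a = (2 * real_of_int l + 1) * pi / (2 * real d))"
      unfolding opt_sin
    proof
      assume h: "\<forall>b::real. sin (real d * b) \<noteq> 0 \<longrightarrow> Vvar d F a \<le> Vvar d F b"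
      then have "Vvar d F a \<le> Vvar d F b0" using sb0 by simp
      then have "1 \<le> (sin (real d * a))\<^sup>2" using cmp[OF sa, of b0] sb0 by simp
      then show "(sin (real d * a))\<^sup>2 = 1" using le1[of a] by linarith
    next
      assume "(sin (real d * a))\<^sup>2 = 1"
      then show "\<forall>b::real. sin (real d * b) \<noteq> 0 \<longrightarrow> Vvar d F a \<le> Vvar d F b"
        using cmp[OF sa] le1 by simp
    qed
  qed
  have P3: "\<forall>l::int. let a = (2 * real_of_int l + 1) * pi / (2 * real d) in
            sin (real d * a) \<noteq> 0 \<and> Vvar d F a = 1 / (real d * (2*F - 1)\<^sup>2)"
  proof (intro allI)
    fix l :: int
    define a where "a = (2 * real_of_int l + 1) * pi / (2 * real d)"
    have "(sin (real d * a))\<^sup>2 = 1" using opt_sin[of a] a_def by blast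
    then have "sin (real d * a) \<noteq> 0" "Vvar d F a = 1 / (real d * (2*F - 1)\<^sup>2)"
      by (auto simp: V c2_def)
    then show "let a = (2 * real_of_int l + 1) * pi / (2 * real d) in
            sin (real d * a) \<noteq> 0 \<and> Vvar d F a = 1 / (real d * (2*F - 1)\<^sup>2)"
      unfolding Let_def a_def by simp
  qed
  have P4: "ghz_C d (rho0 d F) = 4 * F * (1 - F)" by (rule ghzC_val[OF d])
  have P5: "1 / (real d * (2*F - 1)\<^sup>2) = 1 / qfi_theta1 d (rho0 d F)"
    unfolding qfi_theta1_def P4 by (simp add: power2_eq_square algebra_simps)
  show ?thesis using P1 P2 P3 P4 P5 by blast
qed

end
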